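(* Let $f:X\to X$ be a piecewise contracting map on a compact, locally connected metric space $(X,d)$, and let $L$, $\Omega$ and $\Lambda$ denote its limit set, non-wandering set and attractor. Then (i) $L\subset\Omega\subset\Lambda$; (ii) every non-wandering point lying in the interior (in $X$) of $\tilde X$ is recurrent, i.e. if $x\in\operatorname{int}(\tilde X)\cap\Omega$ then $x\in\omega(x)$.
   Context: A map $f:X\to X$ on a compact, locally connected metric space $(X,d)$ is piecewise contracting if there are $N\ge2$ non-empty, pairwise disjoint open sets $X_1,\dots,X_N$ with $X=\bigcup_i\overline{X_i}$, a constant $\lambda\in(0,1)$ with $d(f(x),f(y))\le\lambda d(x,y)$ for all $x,y$ in the same $X_i$, and such that $\tilde X:=\bigcap_{n\ge0}f^{-n}(X\setminus\Delta)\neq\emptyset$, where $\Delta:=X\setminus\bigcup_iX_i$ ($f$ is arbitrary on $\Delta$). For $x\in\tilde X$, $\omega(x)$ is the set of $y\in X$ such that $f^{n_k}(x)\to y$ for some divergent sequence $(n_k)$; the limit set is $L:=\overline{\bigcup_{x\in\tilde X}\omega(x)}$. A point $x\in\tilde X$ is recurrent if $x\in\omega(x)$. A point $x\in X$ is non-wandering if for every $\epsilon>0$ there is a divergent sequence $(n_k)$ with $f^{n_k}(B(x,\epsilon)\cap\tilde X)\cap B(x,\epsilon)\neq\emptyset$ for all $k$; $\Omega$ is the set of non-wandering points. For $A\subset X$ let $F_i(A):=\overline{f(A\cap X_i)}$; an atom of generation $n\ge1$ is a set of the form $F_{i_n}\circ\cdots\circ F_{i_1}(X)$ with $i_1,\dots,i_n\in\{1,\dots,N\}$;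 $\mathcal A_n$ is the set of atoms of generation $n$, $\Lambda_n:=\bigcup_{A\in\mathcal A_n}A$, and the attractor is $\Lambda:=\bigcap_{n\ge1}\Lambda_n$. *)

theory Defs
  imports "HOL-Analysis.Analysis"
begin

text \<open>The space X is a subset of a metric-space type, with the induced metric and
  subspace topology. The pieces are X_0,...,X_{N-1}, given by P :: nat => 'a set.\<close>

definition pc_Delta :: "'a set \<Rightarrow> nat \<Rightarrow> (nat \<Rightarrow> 'a set) \<Rightarrow> 'a set" where
  "pc_Delta X N P = X - (\<Union>i<N. P i)"

definition pc_Xtilde :: "'a set \<Rightarrow> ('a \<Rightarrow> 'a) \<Rightarrow> nat \<Rightarrow> (nat \<Rightarrow> 'a set) \<Rightarrow> 'a set" where
  "pc_Xtilde X f N P = (\<Inter>n. {x \<in> X. (f ^^ n) x \<in> X - pc_Delta X N P})"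

definition piecewise_contracting ::
  "'a::metric_space set \<Rightarrow> ('a \<Rightarrow> 'a) \<Rightarrow> nat \<Rightarrow> (nat \<Rightarrow> 'a set) \<Rightarrow> real \<Rightarrow> bool" where
  "piecewise_contracting X f N P lam \<longleftrightarrow>
     compact X \<and> locally connected X \<and> f ` X \<subseteq> X \<and> N \<ge> 2 \<and>
     (\<forall>i<N. openin (top_of_set X) (P i) \<and> P i \<noteq> {}) \<and>
     (\<forall>i<N. \<forall>j<N. i \<noteq> j \<longrightarrow> P i \<inter> P j = {}) \<and>
     X = (\<Union>i<N. closure (P i)) \<and>
     0 < lam \<and> lam < 1 \<and>
     (\<forall>i<N. \<forall>x\<in>P i. \<forall>y\<in>P i. dist (f x) (f y) \<le> lam * dist x y) \<and>
     pc_Xtilde X f N P \<noteq> {}"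

definition pc_omega :: "'a::metric_space set \<Rightarrow> ('a \<Rightarrow> 'a) \<Rightarrow> 'a \<Rightarrow> 'a set" where
  "pc_omega X f x = {y \<in> X. \<exists>n::nat \<Rightarrow> nat. filterlim n at_top sequentially \<and>
                         (\<lambda>k. (f ^^ n k) x) \<longlonglongrightarrow> y}"

definition pc_limit_set ::
  "'a::metric_space set \<Rightarrow> ('a \<Rightarrow> 'a) \<Rightarrow> nat \<Rightarrow> (nat \<Rightarrow> 'a set) \<Rightarrow> 'a set" where
  "pc_limit_set X f N P = closure (\<Union>x\<in>pc_Xtilde X f N P. pc_omega X f x)"

definition pc_recurrent ::
  "'a::metric_space set \<Rightarrow> ('a \<Rightarrow> 'a) \<Rightarrow> nat \<Rightarrow> (nat \<Rightarrow> 'a set) \<Rightarrow> 'a \<Rightarrow> bool" where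
  "pc_recurrent X f N P x \<longleftrightarrow> x \<in> pc_Xtilde X f N P \<and> x \<in> pc_omega X f x"

definition pc_nonwandering ::
  "'a::metric_space set \<Rightarrow> ('a \<Rightarrow> 'a) \<Rightarrow> nat \<Rightarrow> (nat \<Rightarrow> 'a set) \<Rightarrow> 'a set" where
  "pc_nonwandering X f N P = {x \<in> X. \<forall>\<epsilon>>0. \<exists>n::nat \<Rightarrow> nat.
      filterlim n at_top sequentially \<and>
      (\<forall>k. (f ^^ n k) ` (ball x \<epsilon> \<inter> X \<inter> pc_Xtilde X f N P) \<inter> (ball x \<epsilon> \<inter> X) \<noteq> {})}"

definition pc_F :: "('a::metric_space \<Rightarrow> 'a) \<Rightarrow> (nat \<Rightarrow> 'a set) \<Rightarrow> nat \<Rightarrow> 'a set \<Rightarrow> 'a set" where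
  "pc_F f P i A = closure (f ` (A \<inter> P i))"

text \<open>F_{i_n} o ... o F_{i_1} (X), with the word given by is(0)=i_1, ..., is(n-1)=i_n.\<close>
fun pc_iterF :: "'a::metric_space set \<Rightarrow> ('a \<Rightarrow> 'a) \<Rightarrow> (nat \<Rightarrow> 'a set) \<Rightarrow> (nat \<Rightarrow> nat) \<Rightarrow> nat \<Rightarrow> 'a set" where
  "pc_iterF X f P is 0 = X"
| "pc_iterF X f P is (Suc n) = pc_F f P (is n) (pc_iterF X f P is n)"

definition pc_atoms ::
  "'a::metric_space set \<Rightarrow> ('a \<Rightarrow> 'a) \<Rightarrow> nat \<Rightarrow> (nat \<Rightarrow> 'a set) \<Rightarrow> nat \<Rightarrow> 'a set set" where
  "pc_atoms X f N P n = {pc_iterF X f P is n | is. \<forall>k<n. is k < N}"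

definition pc_Lambda_n ::
  "'a::metric_space set \<Rightarrow> ('a \<Rightarrow> 'a) \<Rightarrow> nat \<Rightarrow> (nat \<Rightarrow> 'a set) \<Rightarrow> nat \<Rightarrow> 'a set" where
  "pc_Lambda_n X f N P n = \<Union>(pc_atoms X f N P n)"

definition pc_attractor ::
  "'a::metric_space set \<Rightarrow> ('a \<Rightarrow> 'a) \<Rightarrow> nat \<Rightarrow> (nat \<Rightarrow> 'a set) \<Rightarrow> 'a set" where
  "pc_attractor X f N P = (\<Inter>n\<in>{1..}. pc_Lambda_n X f N P n)"

end

theory Submission
  imports Defs
begin

lemma funpow_in: "f ` X \<subseteq> X \<Longrightarrow> z \<in> X \<Longrightarrow> (f^^n) z \<in> X"
  by (induction n) auto

lemma Xt_sub: "pc_Xtilde X f N P \<subseteq> X"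
  by (auto simp: pc_Xtilde_def)

lemma Xt_iter:
  assumes "z \<in> pc_Xtilde X f N P"
  shows "(f^^m) z \<in> pc_Xtilde X f N P"
proof -
  have h: "\<And>n. (f^^n) z \<in> X - pc_Delta X N P" using assms by (auto simp: pc_Xtilde_def)
  have "\<And>n. (f^^n) ((f^^m) z) = (f^^(n+m)) z" by (simp add: funpow_add)
  then show ?thesis using h[of m] h unfolding pc_Xtilde_def by auto
qed

lemma Xt_pieces:
  assumes "z \<in> pc_Xtilde X f N P"
  shows "\<exists>i<N. (f^^n) z \<in> P i"
proof -
  have "(f^^n) z \<in> X - pc_Delta X N P" using assms by (auto simp: pc_Xtilde_def)
  then show ?thesis by (auto simp: pc_Delta_def)
qed

lemma iter_in_atom:
  assumes "z \<in> pc_Xtilde X f N P"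
  shows "(f^^n) z \<in> pc_Lambda_n X f N P n"
proof -
  define ws where "ws k = (SOME i. i<N \<and> (f^^k) z \<in> P i)" for k
  have isk: "ws k < N \<and> (f^^k) z \<in> P (ws k)" for k
    unfolding ws_def by (rule someI_ex) (use Xt_pieces[OF assms] in blast)
  have "(f^^n) z \<in> pc_iterF X f P ws n"
  proof (induction n)
    case 0 then show ?case using assms Xt_sub[of X f N P] by auto
  next
    case (Suc n)
    have "(f^^n) z \<in> pc_iterF X f P ws n \<inter> P (ws n)" using Suc isk by auto
    then have "f ((f^^n) z) \<in> f ` (pc_iterF X f P ws n \<inter> P (ws n))" by blast
    then have "f ((f^^n) z) \<in> closure (f ` (pc_iterF X f P ws n \<inter> P (ws n)))" by (rule subsetD[OF closure_subset])
    then show ?case by (simp add: pc_F_def)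
  qed
  moreover have "pc_iterF X f P ws n \<in> pc_atoms X f N P n"
    unfolding pc_atoms_def using isk by blast
  ultimately show ?thesis unfolding pc_Lambda_n_def by (rule UnionI[rotated])
qed

lemma iterF_closed: "closed X \<Longrightarrow> closed (pc_iterF X f P ws n)"
  by (cases n) (auto simp: pc_F_def)

lemma iterF_restrict: "\<forall>k<n. ws k = js k \<Longrightarrow> pc_iterF X f P ws n = pc_iterF X f P js n"
  by (induction n) auto

lemma atoms_finite: "finite (pc_atoms X f N P n)"
proof -
  have "pc_atoms X f N P n \<subseteq> (\<lambda>js. pc_iterF X f P js n) ` ({..<n} \<rightarrow>\<^sub>E {..<N})"
  proof
    fix A assume "A \<in> pc_atoms X f N P n"
    then obtain ws where A: "A = pc_iterF X f P ws n" and b: "\<forall>k<n. ws k < N"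
      unfolding pc_atoms_def by blast
    have "A = pc_iterF X f P (restrict ws {..<n}) n" unfolding A by (rule iterF_restrict) simp
    moreover have "restrict ws {..<n} \<in> {..<n} \<rightarrow>\<^sub>E {..<N}" using b by (simp add: restrict_PiE_iff)
    ultimately show "A \<in> (\<lambda>js. pc_iterF X f P js n) ` ({..<n} \<rightarrow>\<^sub>E {..<N})" by blast
  qed
  moreover have "finite ({..<n} \<rightarrow>\<^sub>E {..<N})" by (rule finite_PiE) auto
  ultimately show ?thesis by (blast intro: finite_subset finite_imageI)
qed

lemma Lambda_closed: "closed X \<Longrightarrow> closed (pc_Lambda_n X f N P n)"
  unfolding pc_Lambda_n_def
  by (rule closed_Union) (use atoms_finite[of X f N P n] in \<open>auto simp: pc_atoms_def iterF_closed\<close>)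

lemma div_iff: "filterlim (n::nat\<Rightarrow>nat) at_top sequentially \<longleftrightarrow> (\<forall>M. \<exists>K. \<forall>k\<ge>K. M \<le> n k)"
  by (simp add: filterlim_at_top eventually_sequentially)

lemma openin_restr:
  assumes "openin (top_of_set X) A" "S \<subseteq> X"
  shows "openin (top_of_set S) (S \<inter> A)"
proof -
  obtain T where T: "open T" "A = X \<inter> T" using assms(1) unfolding openin_open by blast
  then have "S \<inter> A = S \<inter> T" using assms(2) by blast
  then show ?thesis using T(1) openin_open by blast
qed

lemma conn_piece:
  assumes op: "\<forall>i<N. openin (top_of_set X) (P i)"
    and dj: "\<forall>i<N. \<forall>j<N. i \<noteq> j \<longrightarrow> P i \<inter> P j = {}"
    and c: "connected S" and sub: "S \<subseteq> (\<Union>i<N. P i)" and ne: "a \<in> S" and SX: "S \<subseteq> X"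
  shows "\<exists>i<N. S \<subseteq> P i"
proof -
  obtain i where i: "i<N" "a \<in> P i" using sub ne by blast
  define B where "B = (\<Union>j\<in>{j. j<N \<and> j \<noteq> i}. P j)"
  have oB: "openin (top_of_set X) B" unfolding B_def using op by (intro openin_Union) auto
  have oA: "openin (top_of_set X) (P i)" using op i by auto
  have e1: "openin (top_of_set S) (S \<inter> P i)" using openin_restr[OF oA SX] .
  have e2: "openin (top_of_set S) (S \<inter> B)" using openin_restr[OF oB SX] .
  have cov: "S \<subseteq> (S \<inter> P i) \<union> (S \<inter> B)" using sub unfolding B_def by blast
  have dis: "(S \<inter> P i) \<inter> (S \<inter> B) = {}" using dj i unfolding B_def by blast
  have ne1: "S \<inter> P i \<noteq> {}" using i ne by blast
  have nc: "\<not>(\<exists>E1 E2. openin (top_of_set S) E1 \<and> openin (top_of_set S) E2 \<and>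
                 S \<subseteq> E1 \<union> E2 \<and> E1 \<inter> E2 = {} \<and> E1 \<noteq> {} \<and> E2 \<noteq> {})"
    using iffD1[OF connected_openin c] .
  have "S \<inter> B = {}"
  proof (rule ccontr)
    assume "S \<inter> B \<noteq> {}"
    then have "\<exists>E1 E2. openin (top_of_set S) E1 \<and> openin (top_of_set S) E2 \<and>
                 S \<subseteq> E1 \<union> E2 \<and> E1 \<inter> E2 = {} \<and> E1 \<noteq> {} \<and> E2 \<noteq> {}"
      using e1 e2 cov dis ne1 by (intro exI[of _ "S \<inter> P i"] exI[of _ "S \<inter> B"]) simp
    then show False using nc by contradiction
  qed
  then show ?thesis using cov i by blast
qed

lemma conn_nonexp:
  assumes op: "\<forall>i<N. openin (top_of_set X) (P i)"
    and dj: "\<forall>i<N. \<forall>j<N. i \<noteq> j \<longrightarrow> P i \<inter> P j = {}"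
    and lam: "0 < lam" "lam < 1"
    and lip: "\<forall>i<N. \<forall>x\<in>P i. \<forall>y\<in>P i. dist (f x) (f y) \<le> lam * dist x y"
    and c: "connected V" and VX: "V \<subseteq> pc_Xtilde X f N P" and a: "a \<in> V"
  shows "connected ((f^^n) ` V) \<and> (\<forall>z\<in>V. \<forall>w\<in>V. dist ((f^^n) z) ((f^^n) w) \<le> dist z w)"
proof (induction n)
  case 0 then show ?case using c by auto
next
  case (Suc n)
  let ?S = "(f^^n) ` V"
  have SX: "?S \<subseteq> pc_Xtilde X f N P"
  proof
    fix y assume "y \<in> ?S"
    then obtain v where v: "v \<in> V" "y = (f^^n) v" by blast
    show "y \<in> pc_Xtilde X f N P" unfolding v(2) by (rule Xt_iter[OF subsetD[OF VX v(1)]])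
  qed
  have sub: "?S \<subseteq> (\<Union>i<N. P i)"
  proof
    fix y assume "y \<in> ?S"
    then have "y \<in> pc_Xtilde X f N P" using SX by blast
    from Xt_pieces[OF this, of 0] show "y \<in> (\<Union>i<N. P i)" by auto
  qed
  have cS: "connected ?S" using Suc by blast
  have aS: "(f^^n) a \<in> ?S" using a by blast
  have SXX: "?S \<subseteq> X" using SX Xt_sub[of X f N P] by blast
  obtain i where i: "i<N" "?S \<subseteq> P i"
    using conn_piece[OF op dj cS sub aS SXX] by blast
  have "continuous_on (P i) f"
    unfolding continuous_on_iff
  proof (intro ballI allI impI)
    fix x e assume x: "x \<in> P i" and e: "(0::real) < e"
    show "\<exists>d>0. \<forall>x'\<in>P i. dist x' x < d \<longrightarrow> dist (f x') (f x) < e"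
    proof (intro exI[of _ e] conjI ballI impI)
      fix x' assume x': "x' \<in> P i" "dist x' x < e"
      have "dist (f x') (f x) \<le> lam * dist x' x" using lip i x x'(1) by blast
      also have "\<dots> \<le> dist x' x" using lam by (intro mult_left_le_one_le) auto
      finally show "dist (f x') (f x) < e" using x' by simp
    qed (use e in auto)
  qed
  then have "continuous_on ?S f" using i(2) by (rule continuous_on_subset)
  then have cfs: "connected (f ` ?S)" using cS by (rule connected_continuous_image)
  have eq: "f ` ?S = (f^^Suc n) ` V" by (simp add: image_comp)
  have c2: "connected ((f^^Suc n) ` V)" using cfs unfolding eq .
  moreover have "\<forall>z\<in>V. \<forall>w\<in>V. dist ((f^^Suc n) z) ((f^^Suc n) w) \<le> dist z w"
  proof (intro ballI)
    fix z w assume z: "z \<in> V" and w: "w \<in> V"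
    have "(f^^n) z \<in> P i" "(f^^n) w \<in> P i" using i z w by auto
    then have "dist (f ((f^^n) z)) (f ((f^^n) w)) \<le> lam * dist ((f^^n) z) ((f^^n) w)"
      using lip i by blast
    also have "\<dots> \<le> dist ((f^^n) z) ((f^^n) w)" using lam by (intro mult_left_le_one_le) auto
    also have "\<dots> \<le> dist z w" using Suc z w by blast
    finally show "dist ((f^^Suc n) z) ((f^^Suc n) w) \<le> dist z w" by simp
  qed
  ultimately show ?case by (rule conjI)
qed

lemma nw_D:
  assumes "x \<in> pc_nonwandering X f N P" "e > 0"
  shows "\<exists>n. filterlim n at_top sequentially \<and>
      (\<forall>k. (f ^^ n k) ` (ball x e \<inter> X \<inter> pc_Xtilde X f N P) \<inter> (ball x e \<inter> X) \<noteq> {})"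
  using assms unfolding pc_nonwandering_def by blast

theorem theorem2:
  fixes X :: "'a::metric_space set" and f :: "'a \<Rightarrow> 'a"
    and N :: nat and P :: "nat \<Rightarrow> 'a set" and lam :: real
  assumes "piecewise_contracting X f N P lam"
  shows "pc_limit_set X f N P \<subseteq> pc_nonwandering X f N P
       \<and> pc_nonwandering X f N P \<subseteq> pc_attractor X f N P
       \<and> (\<forall>x \<in> (top_of_set X interior_of pc_Xtilde X f N P) \<inter> pc_nonwandering X f N P.
            pc_recurrent X f N P x)"
proof -
  have pcd: "compact X \<and> locally connected X \<and> f ` X \<subseteq> X \<and> N \<ge> 2 \<and>
     (\<forall>i<N. openin (top_of_set X) (P i) \<and> P i \<noteq> {}) \<and>
     (\<forall>i<N. \<forall>j<N. i \<noteq> j \<longrightarrow> P i \<inter> P j = {}) \<and>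
     X = (\<Union>i<N. closure (P i)) \<and>
     0 < lam \<and> lam < 1 \<and>
     (\<forall>i<N. \<forall>x\<in>P i. \<forall>y\<in>P i. dist (f x) (f y) \<le> lam * dist x y) \<and>
     pc_Xtilde X f N P \<noteq> {}" using assms unfolding piecewise_contracting_def .
  have cX: "compact X" by (rule pcd[THEN conjunct1])
  have lc: "locally connected X" by (rule pcd[THEN conjunct2, THEN conjunct1])
  have fX: "f ` X \<subseteq> X" by (rule pcd[THEN conjunct2, THEN conjunct2, THEN conjunct1])
  have op0: "\<forall>i<N. openin (top_of_set X) (P i) \<and> P i \<noteq> {}" by (rule pcd[THEN conjunct2, THEN conjunct2, THEN conjunct2, THEN conjunct2, THEN conjunct1])
  then have op: "\<forall>i<N. openin (top_of_set X) (P i)" by simp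
  have dj: "\<forall>i<N. \<forall>j<N. i \<noteq> j \<longrightarrow> P i \<inter> P j = {}" by (rule pcd[THEN conjunct2, THEN conjunct2, THEN conjunct2, THEN conjunct2, THEN conjunct2, THEN conjunct1])
  have lam: "0 < lam" "lam < 1" by (rule pcd[THEN conjunct2, THEN conjunct2, THEN conjunct2, THEN conjunct2, THEN conjunct2, THEN conjunct2, THEN conjunct2, THEN conjunct1], rule pcd[THEN conjunct2, THEN conjunct2, THEN conjunct2, THEN conjunct2, THEN conjunct2, THEN conjunct2, THEN conjunct2, THEN conjunct2, THEN conjunct1])
  have lip: "\<forall>i<N. \<forall>x\<in>P i. \<forall>y\<in>P i. dist (f x) (f y) \<le> lam * dist x y" by (rule pcd[THEN conjunct2, THEN conjunct2, THEN conjunct2, THEN conjunct2, THEN conjunct2, THEN conjunct2, THEN conjunct2, THEN conjunct2, THEN conjunct2, THEN conjunct1])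
  have clX: "closed X" using cX compact_imp_closed by blast
  let ?Xt = "pc_Xtilde X f N P"
  let ?Om = "pc_nonwandering X f N P"
  have om: "y \<in> ?Om" if x0: "x0 \<in> ?Xt" and y: "y \<in> pc_omega X f x0" for x0 y
  proof -
    from y obtain s where yX: "y \<in> X" and sdiv: "filterlim s at_top sequentially"
      and lim: "(\<lambda>k. (f^^s k) x0) \<longlonglongrightarrow> y"
      unfolding pc_omega_def by blast
    have x0X: "x0 \<in> X" using x0 Xt_sub[of X f N P] by blast
    show ?thesis unfolding pc_nonwandering_def
    proof (intro CollectI conjI allI impI yX)
      fix e :: real assume e: "e > 0"
      from lim e obtain k0 where k0: "\<forall>k\<ge>k0. dist ((f^^s k) x0) y < e"
        unfolding lim_sequentially by blast
      from sdiv obtain k1 where k1: "\<forall>k\<ge>k1. s k0 \<le> s k" unfolding div_iff by blast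
      define K where "K = max k0 k1"
      define m where "m k = s (k+K) - s k0" for k
      have mdiv: "filterlim m at_top sequentially"
        unfolding div_iff
      proof
        fix M
        from sdiv obtain K2 where K2: "\<forall>k\<ge>K2. M + s k0 \<le> s k" unfolding div_iff by blast
        show "\<exists>K'. \<forall>k\<ge>K'. M \<le> m k"
        proof (intro exI[of _ K2] allI impI)
          fix k assume "K2 \<le> k"
          then have "M + s k0 \<le> s (k+K)" using K2 by simp
          then show "M \<le> m k" unfolding m_def by simp
        qed
      qed
      define z where "z = (f^^s k0) x0"
      have z: "z \<in> ball y e \<inter> X \<inter> ?Xt"
        using k0 x0 Xt_iter[OF x0, of "s k0"] Xt_sub[of X f N P]
        by (auto simp: z_def dist_commute)
      have im: "(f^^m k) z \<in> ball y e \<inter> X" for k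
      proof -
        have "(f^^m k) z = (f^^(m k + s k0)) x0" by (simp add: z_def funpow_add)
        also have "m k + s k0 = s (k+K)" using k1 by (auto simp: m_def K_def)
        finally have eq: "(f^^m k) z = (f^^s (k+K)) x0" .
        show ?thesis unfolding eq using k0 funpow_in[OF fX x0X]
          by (auto simp: K_def dist_commute)
      qed
      show "\<exists>n. filterlim n at_top sequentially \<and>
         (\<forall>k. (f ^^ n k) ` (ball y e \<inter> X \<inter> ?Xt) \<inter> (ball y e \<inter> X) \<noteq> {})"
        using mdiv z im by blast
    qed
  qed
  have omcl: "y \<in> ?Om" if y: "y \<in> closure ?Om" for y
  proof -
    have "?Om \<subseteq> X" unfolding pc_nonwandering_def by blast
    then have "closure ?Om \<subseteq> closure X" by (rule closure_mono)
    then have yX: "y \<in> X" using y closure_closed[OF clX] by blast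
    show ?thesis unfolding pc_nonwandering_def
    proof (intro CollectI conjI allI impI yX)
      fix e :: real assume e: "e > 0"
      have e2: "e/2 > 0" using e by simp
      have "\<exists>x\<in>?Om. dist x y < e/2" using y e2 unfolding closure_approachable by blast
      then obtain x where x: "x \<in> ?Om" and dx: "dist x y < e/2" by blast
      obtain s where sdiv: "filterlim s at_top sequentially"
        and ne: "\<forall>k. (f ^^ s k) ` (ball x (e/2) \<inter> X \<inter> ?Xt) \<inter> (ball x (e/2) \<inter> X) \<noteq> {}"
        using nw_D[OF x e2] by blast
      have bb: "ball x (e/2) \<subseteq> ball y e"
      proof
        fix w assume "w \<in> ball x (e/2)"
        then have "dist x w < e/2" by simp
        moreover have "dist y w \<le> dist y x + dist x w" by (rule dist_triangle)
        ultimately show "w \<in> ball y e" using dx by (simp add: dist_commute)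
      qed
      have "\<forall>k. (f ^^ s k) ` (ball y e \<inter> X \<inter> ?Xt) \<inter> (ball y e \<inter> X) \<noteq> {}"
      proof
        fix k
        have "(f ^^ s k) ` (ball x (e/2) \<inter> X \<inter> ?Xt) \<inter> (ball x (e/2) \<inter> X)
          \<subseteq> (f ^^ s k) ` (ball y e \<inter> X \<inter> ?Xt) \<inter> (ball y e \<inter> X)"
          using bb by (intro Int_mono image_mono) auto
        moreover have "(f ^^ s k) ` (ball x (e/2) \<inter> X \<inter> ?Xt) \<inter> (ball x (e/2) \<inter> X) \<noteq> {}"
          using ne by (rule spec)
        ultimately show "(f ^^ s k) ` (ball y e \<inter> X \<inter> ?Xt) \<inter> (ball y e \<inter> X) \<noteq> {}"
          by (metis subset_empty)
      qed
      then show "\<exists>n. filterlim n at_top sequentially \<and>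
         (\<forall>k. (f ^^ n k) ` (ball y e \<inter> X \<inter> ?Xt) \<inter> (ball y e \<inter> X) \<noteq> {})"
        using sdiv by blast
    qed
  qed
  have part1: "pc_limit_set X f N P \<subseteq> ?Om"
  proof -
    have "(\<Union>x\<in>?Xt. pc_omega X f x) \<subseteq> ?Om" using om by blast
    then have "pc_limit_set X f N P \<subseteq> closure ?Om"
      unfolding pc_limit_set_def by (rule closure_mono)
    then show ?thesis using omcl by blast
  qed
  have part2: "?Om \<subseteq> pc_attractor X f N P"
  proof
    fix x assume x: "x \<in> ?Om"
    show "x \<in> pc_attractor X f N P" unfolding pc_attractor_def
    proof
      fix n :: nat assume "n \<in> {1..}"
      have "x \<in> closure (pc_Lambda_n X f N P n)"
        unfolding closure_approachable
      proof (intro allI impI)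
        fix e :: real assume e: "e > 0"
        obtain s where sdiv: "filterlim s at_top sequentially"
          and ne: "\<forall>k. (f ^^ s k) ` (ball x e \<inter> X \<inter> ?Xt) \<inter> (ball x e \<inter> X) \<noteq> {}"
          using nw_D[OF x e] by blast
        from sdiv obtain K where K: "\<forall>k\<ge>K. n \<le> s k" unfolding div_iff by blast
        from ne obtain z where z: "z \<in> ?Xt" "(f ^^ s K) z \<in> ball x e" by blast
        have e1: "n + (s K - n) = s K" using K by simp
        have "(f^^(n + (s K - n))) z = (f^^n) ((f^^(s K - n)) z)" by (simp add: funpow_add)
        then have eq: "(f ^^ s K) z = (f^^n) ((f^^(s K - n)) z)" unfolding e1 .
        have "(f^^n) ((f^^(s K - n)) z) \<in> pc_Lambda_n X f N P n"
          by (rule iter_in_atom[OF Xt_iter[OF z(1)]])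
        then have "(f ^^ s K) z \<in> pc_Lambda_n X f N P n" unfolding eq .
        then show "\<exists>y\<in>pc_Lambda_n X f N P n. dist y x < e" using z(2) by (auto simp: dist_commute)
      qed
      then show "x \<in> pc_Lambda_n X f N P n"
        unfolding closure_closed[OF Lambda_closed[OF clX, of f N P n]] .
    qed
  qed
  have part3: "pc_recurrent X f N P x"
    if x: "x \<in> (top_of_set X interior_of ?Xt) \<inter> ?Om" for x
  proof -
    obtain U where U: "openin (top_of_set X) U" "x \<in> U" "U \<subseteq> ?Xt"
      using x unfolding interior_of_def by blast
    obtain V where V: "openin (top_of_set X) V" "connected V" "x \<in> V" "V \<subseteq> U"
      using locally_connected[THEN iffD1, OF lc, rule_format, of U x] U(1,2) by blast
    obtain d where d: "d > 0" "\<forall>x'\<in>X. dist x' x < d \<longrightarrow> x' \<in> V"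
      using V(1,3) unfolding openin_euclidean_subtopology_iff by blast
    have VX: "V \<subseteq> ?Xt" using V U by blast
    have nex: "dist ((f^^n) x) ((f^^n) z) \<le> dist x z" if "z \<in> V" for z n
      using conn_nonexp[OF op dj lam lip V(2) VX V(3), of n] that V(3) by blast
    have key: "\<exists>n\<ge>M. dist ((f^^n) x) x < e" if e: "e > 0" for e M
    proof -
      define ep where "ep = min d (e/2)"
      have ep: "ep > 0" "ep \<le> d" "ep \<le> e/2" using d e by (auto simp: ep_def)
      obtain s where sdiv: "filterlim s at_top sequentially"
        and ne: "\<forall>k. (f ^^ s k) ` (ball x ep \<inter> X \<inter> ?Xt) \<inter> (ball x ep \<inter> X) \<noteq> {}"
        using nw_D[of x X f N P ep] x ep(1) by blast
      from sdiv obtain K where K: "\<forall>k\<ge>K. M \<le> s k" unfolding div_iff by blast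
      from ne obtain z where z: "z \<in> ball x ep" "z \<in> X" "(f ^^ s K) z \<in> ball x ep" by blast
      have zV: "z \<in> V" using d z ep by (auto simp: dist_commute)
      have "dist ((f^^s K) x) x \<le> dist ((f^^s K) x) ((f^^s K) z) + dist ((f^^s K) z) x"
        by (rule dist_triangle)
      also have "\<dots> \<le> dist x z + dist ((f^^s K) z) x" using nex[OF zV] by simp
      also have "\<dots> < ep + ep" using z by (auto simp: dist_commute intro: add_strict_mono)
      also have "\<dots> \<le> e" using ep by simp
      finally show ?thesis using K by blast
    qed
    define r where "r j = (SOME n. n \<ge> j \<and> dist ((f^^n) x) x < 1 / real (Suc j))" for j
    have r: "r j \<ge> j \<and> dist ((f^^r j) x) x < 1 / real (Suc j)" for j
      unfolding r_def by (rule someI_ex) (rule key, simp)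
    have rdiv: "filterlim r at_top sequentially"
      unfolding div_iff
    proof
      fix M
      show "\<exists>K. \<forall>k\<ge>K. M \<le> r k"
      proof (intro exI allI impI)
        fix k assume "M \<le> k" then show "M \<le> r k" using r[of k] by linarith
      qed
    qed
    have rlim: "(\<lambda>j. (f^^r j) x) \<longlonglongrightarrow> x"
      unfolding lim_sequentially
    proof (intro allI impI)
      fix e :: real assume e: "e > 0"
      obtain n0 where n0: "inverse (real (Suc n0)) < e" using reals_Archimedean[OF e] by blast
      show "\<exists>no. \<forall>j\<ge>no. dist ((f ^^ r j) x) x < e"
      proof (intro exI allI impI)
        fix j assume j: "j \<ge> n0"
        have h1: "1 / real (Suc j) \<le> 1 / real (Suc n0)" using j by (simp add: frac_le)
        have h2: "1 / real (Suc n0) < e" using n0 by (simp add: divide_inverse)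
        have h3: "dist ((f ^^ r j) x) x < 1 / real (Suc j)" using r[of j] by blast
        show "dist ((f ^^ r j) x) x < e" using h1 h2 h3 by linarith
      qed
    qed
    have xX: "x \<in> X" using x unfolding pc_nonwandering_def by blast
    have xt: "x \<in> ?Xt" using U(2,3) by blast
    have "x \<in> pc_omega X f x" unfolding pc_omega_def using xX rdiv rlim by blast
    then show ?thesis unfolding pc_recurrent_def using xt by blast
  qed
  show ?thesis using part1 part2 part3 by blast
qed

end
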